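(* Let $p_0$ be a probability density w.r.t. a $\sigma$-finite measure $\pi$ on $(\mathcal X,\mathcal B)$, $\mathbb P_0(B):=\int_Bp_0\,d\pi$, and $Q:\mathcal X\to(0,\infty)$ measurable with $Q_*:=\operatorname*{ess\,sup}_\pi Q\in(0,\infty)$, $Q\le Q_*$ everywhere, and $\mathbb P_0(A)>0$ where $A=\{Q=Q_*\}$. Fix $\eta>0$ and suppose there exists $\delta>0$ with $$\mathbb P_0\bigl(\{x:Q_*-\delta\le Q(x)<Q_*\}\bigr)>0\quad\text{and}\quad (Q_*-\delta)e^\eta\ge Q_*.$$ Then there exists a measurable $\Delta r$ with $\|\Delta r\|_\infty=\eta$ such that $\mathbb P_0(A_{\Delta r})>0$ and $d_{\rm TV}(p_{\infty,\Delta r},p_{\infty,0})=1$.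
   Context: For $\Delta r\in L^\infty(\pi)$: $Q_{\Delta r}(x):=Q(x)e^{\Delta r(x)}$, $Q_{*,\Delta r}:=\operatorname*{ess\,sup}_\pi Q_{\Delta r}$, $A_{\Delta r}:=\{x:Q_{\Delta r}(x)=Q_{*,\Delta r}\}$, and, when $\mathbb P_0(A_{\Delta r})>0$, $p_{\infty,\Delta r}(x):=p_0(x)\mathbf 1_{A_{\Delta r}}(x)/\mathbb P_0(A_{\Delta r})$ (with $A_0=A$). In the paper $Q(x)=e^{r(x)}\mathbb E[e^{\varepsilon(x)}]$ for a reward $r$ and noise field $\varepsilon$, so $Q_{\Delta r}$ corresponds to the perturbed reward $r+\Delta r$, and $p_{\infty,\Delta r}$ is the limit of the purely synthetic retraining dynamics under the perturbed reward. $d_{\rm TV}(p,q)=\frac12\int|p-q|\,d\pi$. *)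

theory Defs
  imports "HOL-Analysis.Analysis" "HOL-Probability.Essential_Supremum"
begin

definition P0 :: "'a measure \<Rightarrow> ('a \<Rightarrow> real) \<Rightarrow> 'a set \<Rightarrow> real" where
  "P0 M p0 B = (LINT x:B|M. p0 x)"

definition Qpert :: "('a \<Rightarrow> real) \<Rightarrow> ('a \<Rightarrow> real) \<Rightarrow> 'a \<Rightarrow> real" where
  "Qpert Q dr x = Q x * exp (dr x)"

definition ess_sup_r :: "'a measure \<Rightarrow> ('a \<Rightarrow> real) \<Rightarrow> ereal" where
  "ess_sup_r M f = esssup M (\<lambda>x. ereal (f x))"

definition argmax_set :: "'a measure \<Rightarrow> ('a \<Rightarrow> real) \<Rightarrow> 'a set" where
  "argmax_set M f = {x \<in> space M. ereal (f x) = ess_sup_r M f}"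

definition p_inf :: "'a measure \<Rightarrow> ('a \<Rightarrow> real) \<Rightarrow> ('a \<Rightarrow> real) \<Rightarrow> 'a \<Rightarrow> real" where
  "p_inf M p0 f x = p0 x * indicator (argmax_set M f) x / P0 M p0 (argmax_set M f)"

definition d_TV :: "'a measure \<Rightarrow> ('a \<Rightarrow> real) \<Rightarrow> ('a \<Rightarrow> real) \<Rightarrow> real" where
  "d_TV M p q = (1/2) * (\<integral>x. \<bar>p x - q x\<bar> \<partial>M)"

end

theory Submission
  imports Defs
begin

lemma ess_sup_r_eq:
  assumes f: "f \<in> borel_measurable M" and le: "\<forall>x\<in>space M. f x \<le> c"
    and pos: "emeasure M {x\<in>space M. f x = c} > 0"
  shows "ess_sup_r M f = ereal c"
proof (rule antisym)
  have fm: "(\<lambda>x. ereal (f x)) \<in> borel_measurable M" using f by simp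
  show "ess_sup_r M f \<le> ereal c"
    unfolding ess_sup_r_def using fm le by (intro esssup_I) auto
  show "ereal c \<le> ess_sup_r M f"
  proof (rule ccontr)
    assume "\<not> ereal c \<le> ess_sup_r M f"
    hence lt: "ess_sup_r M f < ereal c" by simp
    have "AE x in M. ereal (f x) \<le> ess_sup_r M f"
      unfolding ess_sup_r_def by (rule esssup_AE)
    hence ae: "AE x in M. f x \<noteq> c" by eventually_elim (use lt in auto)
    have ms: "{x\<in>space M. \<not> f x \<noteq> c} \<in> sets M" using f by measurable
    have "emeasure M {x\<in>space M. \<not> f x \<noteq> c} = 0"
      using AE_iff_measurable[OF ms refl] ae by simp
    thus False using pos by simp
  qed
qed

lemma P0_pos_emeasure:
  assumes B: "B \<in> sets M" and P: "P0 M p0 B > 0" and pm: "p0 \<in> borel_measurable M"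
  shows "emeasure M B > 0"
proof (rule ccontr)
  assume "\<not> emeasure M B > 0"
  hence "B \<in> null_sets M" using B by (simp add: null_sets_def zero_less_iff_neq_zero)
  hence "AE x in M. x \<notin> B" by (rule AE_not_in)
  hence "AE x in M. indicator B x *\<^sub>R p0 x = (0::real)" by eventually_elim auto
  hence "(LINT x:B|M. p0 x) = 0" unfolding set_lebesgue_integral_def
    using integral_cong_AE[where g="\<lambda>_. 0::real" and M=M and f="\<lambda>x. indicator B x *\<^sub>R p0 x"]
    using B pm by simp
  thus False using P by (simp add: P0_def)
qed


theorem theorem7:
  fixes M :: "'a measure" and p0 Q :: "'a \<Rightarrow> real" and Qs \<eta> :: real
  assumes sf: "sigma_finite_measure M"
    and p0_meas: "p0 \<in> borel_measurable M"
    and p0_nonneg: "\<forall>x\<in>space M. 0 \<le> p0 x"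
    and p0_int: "integrable M p0"
    and p0_one: "(\<integral>x. p0 x \<partial>M) = 1"
    and Q_meas: "Q \<in> borel_measurable M"
    and Q_pos: "\<forall>x\<in>space M. 0 < Q x"
    and Qs_def: "ess_sup_r M Q = ereal Qs"
    and Qs_pos: "0 < Qs"
    and Q_le: "\<forall>x\<in>space M. Q x \<le> Qs"
    and A_pos: "P0 M p0 (argmax_set M Q) > 0"
    and eta_pos: "\<eta> > 0"
    and delta: "\<exists>\<delta>>0. P0 M p0 {x \<in> space M. Qs - \<delta> \<le> Q x \<and> Q x < Qs} > 0
                       \<and> (Qs - \<delta>) * exp \<eta> \<ge> Qs"
  shows "\<exists>dr. dr \<in> borel_measurable M
           \<and> ess_sup_r M (\<lambda>x. \<bar>dr x\<bar>) = ereal \<eta>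
           \<and> P0 M p0 (argmax_set M (Qpert Q dr)) > 0
           \<and> d_TV M (p_inf M p0 (Qpert Q dr)) (p_inf M p0 Q) = 1"
proof -
  obtain \<delta> where dpos: "\<delta> > 0"
    and PB: "P0 M p0 {x \<in> space M. Qs - \<delta> \<le> Q x \<and> Q x < Qs} > 0"
    and de: "(Qs - \<delta>) * exp \<eta> \<ge> Qs" using delta by blast
  define B where "B = {x \<in> space M. Qs - \<delta> \<le> Q x \<and> Q x < Qs}"
  define A where "A = {x \<in> space M. Q x = Qs}"
  have A_eq: "argmax_set M Q = A" unfolding argmax_set_def A_def Qs_def by simp
  have Bm: "B \<in> sets M" unfolding B_def using Q_meas by measurable
  have Am: "A \<in> sets M" unfolding A_def using Q_meas by measurable
  have PB': "P0 M p0 B > 0" using PB B_def by simp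
  have PA: "P0 M p0 A > 0" using A_pos A_eq by simp
  have eB: "emeasure M B > 0" by (rule P0_pos_emeasure[OF Bm PB' p0_meas])
  have eA: "emeasure M A > 0" by (rule P0_pos_emeasure[OF Am PA p0_meas])
  have AB: "A \<inter> B = {}" unfolding A_def B_def by auto
  have dpos2: "Qs - \<delta> > 0"
  proof (rule ccontr)
    assume "\<not> Qs - \<delta> > 0"
    hence "(Qs - \<delta>) * exp \<eta> \<le> 0" by (simp add: mult_nonpos_nonneg)
    thus False using de Qs_pos by simp
  qed
  define dr where "dr x = (if Qs - \<delta> \<le> Q x \<and> Q x < Qs then ln (Qs / Q x) else - \<eta>)" for x
  have drm: "dr \<in> borel_measurable M" unfolding dr_def using Q_meas by measurable
  have dr_B: "dr x = ln (Qs / Q x)" if "x \<in> B" for x using that unfolding B_def dr_def by simp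
  have dr_nB: "dr x = - \<eta>" if "x \<in> space M" "x \<notin> B" for x
    using that unfolding B_def dr_def by auto
  have abs_le: "\<bar>dr x\<bar> \<le> \<eta>" if x: "x \<in> space M" for x
  proof (cases "x \<in> B")
    case True
    hence q: "Qs - \<delta> \<le> Q x" "Q x < Qs" unfolding B_def by auto
    have qp: "Q x > 0" using x Q_pos by auto
    have "Qs / Q x \<ge> 1" using q qp by simp
    hence g0: "ln (Qs / Q x) \<ge> 0" by simp
    have "Qs \<le> Q x * exp \<eta>" using de q(1) by (smt (verit) exp_gt_zero mult_right_mono)
    hence "Qs / Q x \<le> exp \<eta>" using qp by (simp add: divide_le_eq mult.commute)
    hence "ln (Qs / Q x) \<le> ln (exp \<eta>)" using qp Qs_pos by (subst ln_le_cancel_iff) auto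
    hence "ln (Qs / Q x) \<le> \<eta>" by simp
    thus ?thesis using g0 dr_B[OF True] by simp
  next
    case False
    thus ?thesis using dr_nB[OF x False] eta_pos by simp
  qed
  have abs_eq: "{x \<in> space M. \<bar>dr x\<bar> = \<eta>} \<supseteq> A"
  proof
    fix x assume x: "x \<in> A"
    hence "x \<in> space M" "x \<notin> B" using AB unfolding A_def by auto
    thus "x \<in> {x \<in> space M. \<bar>dr x\<bar> = \<eta>}" using dr_nB eta_pos by auto
  qed
  have "emeasure M A \<le> emeasure M {x \<in> space M. \<bar>dr x\<bar> = \<eta>}"
    by (rule emeasure_mono[OF abs_eq]) (use drm in measurable)
  hence ess1: "ess_sup_r M (\<lambda>x. \<bar>dr x\<bar>) = ereal \<eta>"
    using eA abs_le drm by (intro ess_sup_r_eq) auto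
  have Qp_B: "Qpert Q dr x = Qs" if "x \<in> B" for x
  proof -
    have "Q x > 0" using that Q_pos unfolding B_def by auto
    thus ?thesis using dr_B[OF that] Qs_pos by (simp add: Qpert_def)
  qed
  have Qp_nB: "Qpert Q dr x < Qs" if "x \<in> space M" "x \<notin> B" for x
  proof -
    have "Q x > 0" "Q x \<le> Qs" using that Q_pos Q_le by auto
    moreover have "exp (- \<eta>) < 1" using eta_pos by simp
    ultimately have "Q x * exp (- \<eta>) < Q x * 1"
      by (intro mult_strict_left_mono) auto
    hence "Q x * exp (- \<eta>) < Qs" using \<open>Q x \<le> Qs\<close> by simp
    thus ?thesis using dr_nB[OF that] by (simp add: Qpert_def)
  qed
  have Qpm: "Qpert Q dr \<in> borel_measurable M" unfolding Qpert_def using drm Q_meas by measurable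
  have Qple: "\<forall>x\<in>space M. Qpert Q dr x \<le> Qs"
    using Qp_B Qp_nB by (metis less_eq_real_def)
  have setB: "{x\<in>space M. Qpert Q dr x = Qs} = B"
    using Qp_B Qp_nB Bm sets.sets_into_space by fastforce
  have ess2: "ess_sup_r M (Qpert Q dr) = ereal Qs"
    using Qpm Qple eB setB by (intro ess_sup_r_eq) auto
  have argB: "argmax_set M (Qpert Q dr) = B"
    unfolding argmax_set_def ess2 using setB by simp
  have intS: "(\<integral>x. p0 x * indicator S x \<partial>M) = P0 M p0 S" for S
    unfolding P0_def set_lebesgue_integral_def by (simp add: mult.commute)
  have intg: "integrable M (\<lambda>x. p0 x * indicator S x)" if "S \<in> sets M" for S
    using that p0_int by (rule integrable_real_mult_indicator)
  have eqf: "\<bar>p0 x * indicator B x / P0 M p0 B - p0 x * indicator A x / P0 M p0 A\<bar>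
      = p0 x * indicator B x / P0 M p0 B + p0 x * indicator A x / P0 M p0 A"
    if "x \<in> space M" for x
    using that p0_nonneg PA PB' AB by (auto simp: indicator_def)
  have "(\<integral>x. \<bar>p_inf M p0 (Qpert Q dr) x - p_inf M p0 Q x\<bar> \<partial>M)
      = (\<integral>x. p0 x * indicator B x / P0 M p0 B + p0 x * indicator A x / P0 M p0 A \<partial>M)"
    unfolding p_inf_def argB A_eq using eqf by (intro Bochner_Integration.integral_cong) auto
  also have "\<dots> = (\<integral>x. p0 x * indicator B x \<partial>M) / P0 M p0 B + (\<integral>x. p0 x * indicator A x \<partial>M) / P0 M p0 A"
    using intg[OF Am] intg[OF Bm] by simp
  also have "\<dots> = 2" using intS PA PB' by simp
  finally have "d_TV M (p_inf M p0 (Qpert Q dr)) (p_inf M p0 Q) = 1"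
    unfolding d_TV_def by simp
  thus ?thesis using drm ess1 argB PB' by auto
qed

end
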